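(* Let $\mathbf{F}_q$ have characteristic $p$, let $c\ge3$, and let $a_1=0,a_2=1,a_3,\dots,a_c$ be distinct elements of $\mathbf{F}_q$; put $D=\mathbf{F}_q\setminus\{a_1,\dots,a_c\}$. Then for every integer $1\le k\le q-c$ and every $b\in\mathbf{F}_q$, $$N(k,b,D)-\frac1q\binom{q-c}{k}=\frac1q(-1)^kR^c_k-(-1)^k\sum_{i_1=0}^{k}\sum_{i_2=0}^{k-i_1}\cdots\sum_{i_{c-2}=0}^{k-i_1-\cdots-i_{c-3}}S\Big(k-\sum_{j=1}^{c-2}i_j,\ k-\sum_{j=1}^{c-2}i_j-b+\sum_{j=1}^{c-2}i_ja_{c+1-j}\Big),$$ where the second argument of $S$ is computed in $\mathbf{F}_q$ (integers mapped into $\mathbf{F}_p$). Moreover, if $b,a_2,\dots,a_c$ are linearly independent over $\mathbf{F}_p$, then $$N(k,b,D)=\frac1q\binom{q-c}{k}+\frac1q(-1)^kR^c_k.$$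
   Context: $N(k,b,D)$ denotes the number of $k$-element subsets $\{x_1,\dots,x_k\}\subseteq D$ with $x_1+\dots+x_k=b$. Binomial coefficients $\binom{x}{m}=x(x-1)\cdots(x-m+1)/m!$ for real $x$, integer $m\ge0$. $R^1_j=-(-1)^{\lfloor j/p\rfloor}\binom{q/p-1}{\lfloor j/p\rfloor}$ for integers $j\ge0$, and $R^c_k=\sum_{j=0}^kR^{c-1}_j$ for $c\ge2$. For an integer $k\ge0$ and $e\in\mathbf{F}_q$: if $e\in\mathbf{F}_p$, $S(k,e)=\sum_{0\le i\le k,\ i\equiv e\ (\mathrm{mod}\ p)}R^1_i$ (sum over integers $i$ whose image in $\mathbf{F}_p$ is $e$); if $e\notin\mathbf{F}_p$, $S(k,e)=0$. *)

theory Defs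
  imports Complex_Main "HOL-Library.Cardinality"
begin

definition Nsub :: "nat \<Rightarrow> 'a::comm_monoid_add \<Rightarrow> 'a set \<Rightarrow> nat" where
  "Nsub k b D = card {X. X \<subseteq> D \<and> finite X \<and> card X = k \<and> (\<Sum>x\<in>X. x) = b}"

definition R1 :: "nat \<Rightarrow> nat \<Rightarrow> nat \<Rightarrow> real" where
  "R1 p q j = - ((-1) ^ (j div p) * ((real q / real p - 1) gchoose (j div p)))"

text \<open>R^c_k for c \<ge> 1 (the value for c = 0 is an irrelevant default).\<close>
fun Rc :: "nat \<Rightarrow> nat \<Rightarrow> nat \<Rightarrow> nat \<Rightarrow> real" where
  "Rc p q 0 k = 0"
| "Rc p q (Suc 0) k = R1 p q k"
| "Rc p q (Suc (Suc c)) k = (\<Sum>j\<le>k. Rc p q (Suc c) j)"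

text \<open>S(k,e): e lies in the prime field F_p iff it is of the form of_nat n;
  integer i has image e in F_p iff of_nat i = e.\<close>
definition Sfun :: "nat \<Rightarrow> nat \<Rightarrow> nat \<Rightarrow> 'a::field \<Rightarrow> real" where
  "Sfun p q k e = (if e \<in> range (of_nat :: nat \<Rightarrow> 'a)
      then (\<Sum>i\<in>{i. i \<le> k \<and> (of_nat i :: 'a) = e}. R1 p q i) else 0)"

end

theory Submission
  imports Defs
begin

lemma sum_rev: "(\<Sum>t\<le>(n::nat). f (n - t)) = (\<Sum>t\<le>n. f t)"
  by (rule sum.reindex_bij_witness[where i="\<lambda>i. n - i" and j="\<lambda>i. n - i"]) auto

lemma alt_gchoose: "(\<Sum>t\<le>n. (-1)^t * ((x::real) gchoose (n - t))) = (x - 1) gchoose n"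
proof (induction n)
  case 0 then show ?case by simp
next
  case (Suc n)
  have "(\<Sum>t\<le>Suc n. (-1)^t * (x gchoose (Suc n - t)))
      = (x gchoose Suc n) - (\<Sum>t\<le>n. (-1)^t * (x gchoose (n - t)))"
    by (subst sum.atMost_Suc_shift) (simp add: sum_negf)
  also have "\<dots> = (x - 1) gchoose Suc n"
    using Suc gbinomial_Suc_Suc[of "x-1" n] by simp
  finally show ?case .
qed

lemma Nsub_0: "Nsub 0 b (D::'a::comm_monoid_add set) = (if b = 0 then 1 else 0)"
proof -
  have "{X. X \<subseteq> D \<and> finite X \<and> card X = 0 \<and> (\<Sum>x\<in>X. x) = b} = (if b = 0 then {{}} else {})"
    by auto
  then show ?thesis unfolding Nsub_def by simp
qed

lemma card_with:
  fixes D :: "'a::{ab_group_add} set"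
  assumes "y \<in> D"
  shows "card {X. (X \<subseteq> D \<and> finite X \<and> card X = Suc k \<and> (\<Sum>x\<in>X. x) = b) \<and> y \<in> X}
       = Nsub k (b - y) (D - {y})"
proof -
  let ?T = "{X. X \<subseteq> D - {y} \<and> finite X \<and> card X = k \<and> (\<Sum>x\<in>X. x) = b - y}"
  have eq: "{X. (X \<subseteq> D \<and> finite X \<and> card X = Suc k \<and> (\<Sum>x\<in>X. x) = b) \<and> y \<in> X} = insert y ` ?T"
  proof (rule set_eqI, rule iffI)
    fix X assume X: "X \<in> {X. (X \<subseteq> D \<and> finite X \<and> card X = Suc k \<and> (\<Sum>x\<in>X. x) = b) \<and> y \<in> X}"
    have fX: "finite X" and yX: "y \<in> X" and XD: "X \<subseteq> D" and cX: "card X = Suc k" and sX: "(\<Sum>x\<in>X. x) = b"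
      using X by auto
    have "(\<Sum>x\<in>X. x) = y + (\<Sum>x\<in>X - {y}. x)" by (rule sum.remove[OF fX yX])
    then have s2: "(\<Sum>x\<in>X - {y}. x) = b - y" using sX by (simp add: algebra_simps)
    have c2: "card (X - {y}) = k" using cX yX fX by simp
    have "X - {y} \<subseteq> D - {y}" using XD by blast
    then have "X - {y} \<in> ?T" using s2 c2 fX by simp
    moreover have "X = insert y (X - {y})" using X by auto
    ultimately show "X \<in> insert y ` ?T" by blast
  next
    fix X assume "X \<in> insert y ` ?T"
    then obtain Y where Y: "Y \<in> ?T" "X = insert y Y" by blast
    then have "y \<notin> Y" by auto
    have fY: "finite Y" and YD: "Y \<subseteq> D - {y}" and cY: "card Y = k" and sY: "(\<Sum>x\<in>Y. x) = b - y"
      using Y by auto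
    have "(\<Sum>x\<in>insert y Y. x) = y + (\<Sum>x\<in>Y. x)" using fY \<open>y \<notin> Y\<close> by simp
    then have "(\<Sum>x\<in>X. x) = b" using sY Y(2) by simp
    moreover have "card X = Suc k" using Y(2) fY \<open>y \<notin> Y\<close> cY by simp
    moreover have "X \<subseteq> D" using Y(2) YD assms by blast
    ultimately show "X \<in> {X. (X \<subseteq> D \<and> finite X \<and> card X = Suc k \<and> (\<Sum>x\<in>X. x) = b) \<and> y \<in> X}"
      using Y(2) fY by simp
  qed
  have "inj_on (insert y) ?T"
  proof (rule inj_onI)
    fix X Y assume "X \<in> ?T" "Y \<in> ?T" "insert y X = insert y Y"
    then have "y \<notin> X" "y \<notin> Y" by auto
    with \<open>insert y X = insert y Y\<close> show "X = Y" by (metis Diff_insert_absorb)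
  qed
  then show ?thesis unfolding eq Nsub_def by (simp add: card_image)
qed

lemma Nsub_split:
  fixes D :: "'a::{ab_group_add,finite} set"
  assumes "y \<in> D"
  shows "Nsub (Suc k) b D = Nsub (Suc k) b (D - {y}) + Nsub k (b - y) (D - {y})"
proof -
  let ?S = "{X. X \<subseteq> D \<and> finite X \<and> card X = Suc k \<and> (\<Sum>x\<in>X. x) = b}"
  let ?A = "{X. X \<subseteq> D - {y} \<and> finite X \<and> card X = Suc k \<and> (\<Sum>x\<in>X. x) = b}"
  let ?B = "{X. (X \<subseteq> D \<and> finite X \<and> card X = Suc k \<and> (\<Sum>x\<in>X. x) = b) \<and> y \<in> X}"
  have e: "?S = ?A \<union> ?B" by blast
  have d: "?A \<inter> ?B = {}" by blast
  have "card (?A \<union> ?B) = card ?A + card ?B"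
    by (rule card_Un_disjoint[OF _ _ d]) simp_all
  then have "card ?S = Nsub (Suc k) b (D - {y}) + card ?B"
    unfolding Nsub_def e by simp
  then show ?thesis using card_with[OF assms] unfolding Nsub_def by simp
qed

lemma Nsub_remove:
  fixes D :: "'a::{comm_ring_1,finite} set"
  assumes "y \<in> D"
  shows "real (Nsub k b (D - {y})) = (\<Sum>t\<le>k. (-1)^t * real (Nsub (k - t) (b - of_nat t * y) D))"
proof (induction k arbitrary: b)
  case 0 then show ?case by (simp add: Nsub_0)
next
  case (Suc k)
  have "real (Nsub (Suc k) b (D - {y})) = real (Nsub (Suc k) b D) - real (Nsub k (b - y) (D - {y}))"
    using Nsub_split[OF assms, of k b] by simp
  also have "\<dots> = real (Nsub (Suc k) b D) - (\<Sum>t\<le>k. (-1)^t * real (Nsub (k - t) (b - y - of_nat t * y) D))"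
    using Suc by simp
  also have "\<dots> = (\<Sum>t\<le>Suc k. (-1)^t * real (Nsub (Suc k - t) (b - of_nat t * y) D))"
    by (subst sum.atMost_Suc_shift) (simp add: sum_negf algebra_simps)
  finally show ?case .
qed

definition Fn :: "nat set \<Rightarrow> nat \<Rightarrow> (nat \<Rightarrow> nat) set" where
  "Fn J k = {i. (\<forall>j. j \<notin> J \<longrightarrow> i j = 0) \<and> sum i J \<le> k}"

lemma finite_Fn: assumes "finite J" shows "finite (Fn J k)"
proof -
  have "Fn J k \<subseteq> {f. \<forall>x. (x \<in> J \<longrightarrow> f x \<in> {..k}) \<and> (x \<notin> J \<longrightarrow> f x = 0)}"
  proof
    fix i assume i: "i \<in> Fn J k"
    have "i j \<le> k" if "j \<in> J" for j
    proof -
      have "i j \<le> sum i J" by (rule member_le_sum) (use that assms in auto)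
      then show ?thesis using i unfolding Fn_def by simp
    qed
    then show "i \<in> {f. \<forall>x. (x \<in> J \<longrightarrow> f x \<in> {..k}) \<and> (x \<notin> J \<longrightarrow> f x = 0)}"
      using i unfolding Fn_def by auto
  qed
  then show ?thesis using finite_set_of_finite_funs[OF assms, of "{..k}" 0] finite_subset by blast
qed

lemma Fn_empty: "Fn {} k = {\<lambda>_. 0}"
  unfolding Fn_def by auto

lemma sum_upd_notin: "x \<notin> J \<Longrightarrow> (\<Sum>j\<in>J. g ((i(x:=t)) j) j) = (\<Sum>j\<in>J. g (i j) j)"
  by (rule sum.cong) auto

lemma sum_Fn_insert:
  assumes J: "finite J" and x: "x \<notin> J"
  shows "sum F (Fn (insert x J) k) = (\<Sum>t\<le>k. \<Sum>i\<in>Fn J (k - t). F (i(x:=t)))"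
proof -
  have "(\<Sum>t\<le>k. \<Sum>i\<in>Fn J (k - t). F (i(x:=t)))
      = (\<Sum>(t,i)\<in>Sigma {..k} (\<lambda>t. Fn J (k - t)). F (i(x:=t)))"
    by (rule sum.Sigma) (auto intro: finite_Fn[OF J])
  also have "\<dots> = sum F (Fn (insert x J) k)"
  proof -
    have H1: "i x = 0 \<and> i(x:=t) \<in> Fn (insert x J) k" if "t \<le> k" "i \<in> Fn J (k-t)" for t i
    proof -
      have "sum (i(x:=t)) J = sum i J" using sum_upd_notin[OF x, of "\<lambda>v j. v"] by simp
      then show ?thesis using that J x unfolding Fn_def by auto
    qed
    have H2: "b x \<le> k \<and> b(x:=0) \<in> Fn J (k - b x)" if "b \<in> Fn (insert x J) k" for b
    proof -
      have s: "sum b (insert x J) = b x + sum b J" using J x by simp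
      have "sum (b(x:=0)) J = sum b J" using sum_upd_notin[OF x, of "\<lambda>v j. v"] by simp
      then show ?thesis using that s unfolding Fn_def by auto
    qed
    show ?thesis
    proof (rule sum.reindex_bij_witness[where i="\<lambda>b. (b x, b(x:=0))" and j="\<lambda>(t,i). i(x:=t)"])
      fix a assume a: "a \<in> Sigma {..k} (\<lambda>t. Fn J (k - t))"
      obtain t i where ti: "a = (t,i)" by (cases a)
      have tk: "t \<le> k" and iF: "i \<in> Fn J (k - t)" using a ti by auto
      note h = H1[OF tk iF]
      show "(\<lambda>b. (b x, b(x := 0))) (case a of (t, i) \<Rightarrow> i(x := t)) = a"
        using h ti by (simp add: fun_upd_idem)
      show "(case a of (t, i) \<Rightarrow> i(x := t)) \<in> Fn (insert x J) k" using h ti by simp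
      show "F (case a of (t, i) \<Rightarrow> i(x := t)) = (case a of (t, i) \<Rightarrow> F (i(x := t)))" using ti by simp
    next
      fix b assume b: "b \<in> Fn (insert x J) k"
      show "(case (b x, b(x := 0)) of (t, i) \<Rightarrow> i(x := t)) = b" by simp
      show "(b x, b(x := 0)) \<in> Sigma {..k} (\<lambda>t. Fn J (k - t))" using H2[OF b] by simp
    qed
  qed
  finally show ?thesis ..
qed

lemma upd_sum: "finite J \<Longrightarrow> x \<notin> J \<Longrightarrow> sum (i(x:=t)) (insert x J) = t + sum i J"
  using sum_upd_notin[of x J "\<lambda>v j. v" i t] by simp

lemma upd_wsum: "finite J \<Longrightarrow> x \<notin> J \<Longrightarrow>
  (\<Sum>j\<in>insert x J. f ((i(x:=t)) j) j) = f t x + (\<Sum>j\<in>J. f (i j) j)"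
  using sum_upd_notin[of x J f i t] by simp

lemma Nsub_remove_set:
  fixes \<alpha> :: "nat \<Rightarrow> 'a::{comm_ring_1,finite}"
  assumes "finite J"
  shows "inj_on \<alpha> J \<Longrightarrow> \<alpha> ` J \<subseteq> E \<Longrightarrow> real (Nsub k b (E - \<alpha> ` J))
     = (\<Sum>i\<in>Fn J k. (-1)^(sum i J) * real (Nsub (k - sum i J) (b - (\<Sum>j\<in>J. of_nat (i j) * \<alpha> j)) E))"
  using assms
proof (induction J arbitrary: k b rule: finite_induct)
  case empty
  then show ?case by (simp add: Fn_empty)
next
  case (insert x J)
  have inj: "inj_on \<alpha> J" and nx: "\<alpha> x \<notin> \<alpha> ` J" using insert.prems insert.hyps by auto
  have sub: "\<alpha> ` J \<subseteq> E" using insert.prems by auto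
  have y: "\<alpha> x \<in> E - \<alpha> ` J" using insert.prems nx by auto
  have set: "E - \<alpha> ` insert x J = (E - \<alpha> ` J) - {\<alpha> x}" by auto
  have "real (Nsub k b (E - \<alpha> ` insert x J))
      = (\<Sum>t\<le>k. (-1)^t * real (Nsub (k - t) (b - of_nat t * \<alpha> x) (E - \<alpha> ` J)))"
    unfolding set by (rule Nsub_remove[OF y])
  also have "\<dots> = (\<Sum>t\<le>k. (-1)^t * (\<Sum>i\<in>Fn J (k - t). (-1)^(sum i J) *
       real (Nsub (k - t - sum i J) (b - of_nat t * \<alpha> x - (\<Sum>j\<in>J. of_nat (i j) * \<alpha> j)) E)))"
    using insert.IH[OF inj sub] by simp
  also have "\<dots> = (\<Sum>t\<le>k. \<Sum>i\<in>Fn J (k - t). (-1)^(sum (i(x:=t)) (insert x J)) *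
       real (Nsub (k - sum (i(x:=t)) (insert x J))
          (b - (\<Sum>j\<in>insert x J. of_nat ((i(x:=t)) j) * \<alpha> j)) E))"
    unfolding sum_distrib_left
    apply (rule sum.cong[OF refl])+
    apply (simp only: upd_sum[OF insert.hyps] upd_wsum[OF insert.hyps, where f="\<lambda>v j. of_nat v * \<alpha> j"])
    by (simp add: power_add algebra_simps diff_diff_eq)
  also have "\<dots> = (\<Sum>i\<in>Fn (insert x J) k. (-1)^(sum i (insert x J)) *
       real (Nsub (k - sum i (insert x J)) (b - (\<Sum>j\<in>insert x J. of_nat (i j) * \<alpha> j)) E))"
    by (rule sum_Fn_insert[OF insert.hyps, symmetric])
  finally show ?case .
qed

lemma Fn_binom:
  assumes "finite J"
  shows "(\<Sum>i\<in>Fn J k. (-1)^(sum i J) * ((x::real) gchoose (k - sum i J))) = (x - of_nat (card J)) gchoose k"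
  using assms
proof (induction J arbitrary: k x rule: finite_induct)
  case empty
  then show ?case by (simp add: Fn_empty)
next
  case (insert y J)
  have "(\<Sum>i\<in>Fn (insert y J) k. (-1)^(sum i (insert y J)) * (x gchoose (k - sum i (insert y J))))
     = (\<Sum>t\<le>k. \<Sum>i\<in>Fn J (k - t). (-1)^(sum (i(y:=t)) (insert y J)) * (x gchoose (k - sum (i(y:=t)) (insert y J))))"
    by (rule sum_Fn_insert[OF insert.hyps])
  also have "\<dots> = (\<Sum>t\<le>k. (-1)^t * (\<Sum>i\<in>Fn J (k - t). (-1)^(sum i J) * (x gchoose (k - t - sum i J))))"
    unfolding sum_distrib_left
    apply (rule sum.cong[OF refl])+
    apply (simp only: upd_sum[OF insert.hyps])
    by (simp add: power_add diff_diff_eq)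
  also have "\<dots> = (\<Sum>t\<le>k. (-1)^t * ((x - of_nat (card J)) gchoose (k - t)))"
    by (simp only: insert.IH)
  also have "\<dots> = (x - of_nat (card J) - 1) gchoose k" by (rule alt_gchoose)
  finally show ?case using insert.hyps by (simp add: algebra_simps)
qed

lemma Fn_Rc:
  assumes "finite J"
  shows "(\<Sum>i\<in>Fn J k. Rc p q 2 (k - sum i J)) = Rc p q (card J + 2) k"
  using assms
proof (induction J arbitrary: k rule: finite_induct)
  case empty
  then show ?case by (simp add: Fn_empty numeral_2_eq_2)
next
  case (insert y J)
  have "(\<Sum>i\<in>Fn (insert y J) k. Rc p q 2 (k - sum i (insert y J)))
     = (\<Sum>t\<le>k. \<Sum>i\<in>Fn J (k - t). Rc p q 2 (k - sum (i(y:=t)) (insert y J)))"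
    by (rule sum_Fn_insert[OF insert.hyps])
  also have "\<dots> = (\<Sum>t\<le>k. (\<Sum>i\<in>Fn J (k - t). Rc p q 2 (k - t - sum i J)))"
    apply (rule sum.cong[OF refl])+
    by (simp only: upd_sum[OF insert.hyps] diff_diff_eq)
  also have "\<dots> = (\<Sum>t\<le>k. Rc p q (card J + 2) (k - t))"
    by (simp only: insert.IH)
  also have "\<dots> = (\<Sum>t\<le>k. Rc p q (card J + 2) t)" by (rule sum_rev)
  also have "\<dots> = Rc p q (card (insert y J) + 2) k"
    using insert.hyps by (simp add: numeral_2_eq_2)
  finally show ?case .
qed

lemma dc:
  fixes \<beta> :: "'a::{ab_group_add,finite}"
  shows "real (Suc n) * real (Nsub (Suc n) \<beta> UNIV) = (\<Sum>x\<in>UNIV. real (Nsub n (\<beta> - x) (UNIV - {x})))"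
proof -
  let ?S = "{X. X \<subseteq> (UNIV::'a set) \<and> finite X \<and> card X = Suc n \<and> (\<Sum>x\<in>X. x) = \<beta>}"
  have "(\<Sum>x\<in>UNIV. real (Nsub n (\<beta> - x) (UNIV - {x})))
      = (\<Sum>x\<in>UNIV. real (card {X. (X \<subseteq> UNIV \<and> finite X \<and> card X = Suc n \<and> (\<Sum>x\<in>X. x) = \<beta>) \<and> x \<in> X}))"
    using card_with[of _ UNIV n \<beta>] by simp
  also have "\<dots> = (\<Sum>x\<in>UNIV. \<Sum>X\<in>?S. (of_bool (x \<in> X) :: real))"
  proof (rule sum.cong[OF refl])
    fix x :: 'a
    have "?S \<inter> {X. x \<in> X} = {X. (X \<subseteq> UNIV \<and> finite X \<and> card X = Suc n \<and> (\<Sum>x\<in>X. x) = \<beta>) \<and> x \<in> X}"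
      by blast
    then show "real (card {X. (X \<subseteq> UNIV \<and> finite X \<and> card X = Suc n \<and> (\<Sum>x\<in>X. x) = \<beta>) \<and> x \<in> X})
        = (\<Sum>X\<in>?S. (of_bool (x \<in> X) :: real))"
      by (subst sum_of_bool_eq) simp_all
  qed
  also have "\<dots> = (\<Sum>X\<in>?S. \<Sum>x\<in>UNIV. (of_bool (x \<in> X) :: real))"
    by (rule sum.swap)
  also have "\<dots> = (\<Sum>X\<in>?S. real (Suc n))"
  proof (rule sum.cong[OF refl])
    fix X assume "X \<in> ?S"
    then have "card X = Suc n" by simp
    moreover have "UNIV \<inter> {x. x \<in> X} = X" by blast
    ultimately show "(\<Sum>x\<in>UNIV. (of_bool (x \<in> X) :: real)) = real (Suc n)"
      by (subst sum_of_bool_eq) simp_all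
  qed
  also have "\<dots> = real (Suc n) * real (Nsub (Suc n) \<beta> UNIV)"
    unfolding Nsub_def by simp
  finally show ?thesis ..
qed

lemma Nsub_total:
  "(\<Sum>\<gamma>\<in>UNIV. real (Nsub j \<gamma> (UNIV :: 'a::{comm_monoid_add,finite} set))) = real (CARD('a) choose j)"
proof -
  let ?A = "{X. X \<subseteq> (UNIV::'a set) \<and> card X = j}"
  have "(\<Sum>\<gamma>\<in>UNIV. real (Nsub j \<gamma> (UNIV :: 'a set))) = (\<Sum>\<gamma>\<in>UNIV. \<Sum>X\<in>{X \<in> ?A. (\<Sum>x\<in>X. x) = \<gamma>}. (1::real))"
    unfolding Nsub_def by (intro sum.cong) auto
  also have "\<dots> = (\<Sum>X\<in>?A. (1::real))"
    by (rule sum.group) auto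
  also have "\<dots> = real (CARD('a) choose j)"
    using n_subsets[of "UNIV :: 'a set" j] by simp
  finally show ?thesis .
qed

lemma sum_affine:
  fixes c :: "'a::{field,finite}"
  assumes "c \<noteq> 0"
  shows "(\<Sum>x\<in>UNIV. f (\<beta> - c * x)) = (\<Sum>\<gamma>\<in>UNIV. f \<gamma>)"
  by (rule sum.reindex_bij_witness[where i="\<lambda>\<gamma>. (\<beta> - \<gamma>) / c" and j="\<lambda>x. \<beta> - c * x"])
     (use assms in \<open>auto simp: field_simps\<close>)

lemma sum_dvd_reindex:
  fixes p :: nat
  assumes "p > 0"
  shows "(\<Sum>s\<le>n. if p dvd s then g (s div p) else 0) = (\<Sum>u\<le>n div p. (g u :: real))"
proof -
  have "(\<Sum>s\<le>n. if p dvd s then g (s div p) else 0) = (\<Sum>s\<in>{s. s \<le> n \<and> p dvd s}. g (s div p))"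
    by (simp add: sum.If_cases Int_def)
  also have "{s. s \<le> n \<and> p dvd s} = (\<lambda>u. p * u) ` {..n div p}"
  proof (rule set_eqI, rule iffI)
    fix s assume "s \<in> {s. s \<le> n \<and> p dvd s}"
    then obtain u where "s = p * u" "p * u \<le> n" by auto
    then have "(p * u) div p \<le> n div p" by (intro div_le_mono) simp
    then have "u \<le> n div p" using assms by simp
    then show "s \<in> (\<lambda>u. p * u) ` {..n div p}" using \<open>s = p * u\<close> by auto
  next
    fix s assume "s \<in> (\<lambda>u. p * u) ` {..n div p}"
    then obtain u where u: "s = p * u" "u \<le> n div p" by auto
    then have "p * u \<le> p * (n div p)" by simp
    also have "\<dots> \<le> n" by simp
    finally show "s \<in> {s. s \<le> n \<and> p dvd s}" using u by auto
  qed
  also have "(\<Sum>s\<in>(\<lambda>u. p * u) ` {..n div p}. g (s div p)) = (\<Sum>u\<le>n div p. g u)"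
    by (subst sum.reindex) (use assms in \<open>auto simp: inj_on_def\<close>)
  finally show ?thesis .
qed

definition hh :: "real \<Rightarrow> nat \<Rightarrow> real" where "hh Q u = (-1)^u * (Q gchoose u)"
definition EE :: "nat \<Rightarrow> real \<Rightarrow> nat \<Rightarrow> real" where "EE p Q n = (if p dvd n then hh Q (n div p) else 0)"

lemma CHAR_pos_fin: "CHAR('a::{field,finite}) > 0"
  by (rule finite_imp_CHAR_pos) simp

lemma recursion:
  fixes \<beta> :: "'a::{field,finite}"
  shows "real (Suc n) * real (Nsub (Suc n) \<beta> UNIV) = (\<Sum>t\<le>n. (-1)^t *
     (if CHAR('a) dvd Suc t then real CARD('a) * real (Nsub (n-t) \<beta> UNIV) else real CARD('a) gchoose (n-t)))"
proof -
  have "real (Suc n) * real (Nsub (Suc n) \<beta> UNIV) = (\<Sum>x\<in>UNIV. real (Nsub n (\<beta> - x) (UNIV - {x})))"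
    by (rule dc)
  also have "\<dots> = (\<Sum>x\<in>UNIV. \<Sum>t\<le>n. (-1)^t * real (Nsub (n - t) (\<beta> - of_nat (Suc t) * x) UNIV))"
  proof (rule sum.cong[OF refl])
    fix x :: 'a
    have "real (Nsub n (\<beta> - x) (UNIV - {x})) = (\<Sum>t\<le>n. (-1)^t * real (Nsub (n - t) (\<beta> - x - of_nat t * x) UNIV))"
      by (rule Nsub_remove) simp
    also have "\<dots> = (\<Sum>t\<le>n. (-1)^t * real (Nsub (n - t) (\<beta> - of_nat (Suc t) * x) UNIV))"
      by (simp add: algebra_simps)
    finally show "real (Nsub n (\<beta> - x) (UNIV - {x})) = \<dots>" .
  qed
  also have "\<dots> = (\<Sum>t\<le>n. (-1)^t * (\<Sum>x\<in>UNIV. real (Nsub (n - t) (\<beta> - of_nat (Suc t) * x) UNIV)))"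
    by (subst sum.swap) (simp add: sum_distrib_left)
  also have "\<dots> = (\<Sum>t\<le>n. (-1)^t *
     (if CHAR('a) dvd Suc t then real CARD('a) * real (Nsub (n-t) \<beta> UNIV) else real CARD('a) gchoose (n-t)))"
  proof (rule sum.cong[OF refl])
    fix t
    show "(-1)^t * (\<Sum>x\<in>UNIV. real (Nsub (n - t) (\<beta> - of_nat (Suc t) * x) UNIV)) = (-1)^t *
     (if CHAR('a) dvd Suc t then real CARD('a) * real (Nsub (n-t) \<beta> UNIV) else real CARD('a) gchoose (n-t))"
    proof (cases "CHAR('a) dvd Suc t")
      case True
      then have "(of_nat (Suc t) :: 'a) = 0" using of_nat_eq_0_iff_char_dvd by blast
      then show ?thesis using True by simp
    next
      case False
      then have ne: "(of_nat (Suc t) :: 'a) \<noteq> 0" using of_nat_eq_0_iff_char_dvd by blast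
      have "(\<Sum>x\<in>UNIV. real (Nsub (n - t) (\<beta> - of_nat (Suc t) * x) UNIV))
          = (\<Sum>\<gamma>\<in>UNIV. real (Nsub (n - t) \<gamma> (UNIV :: 'a set)))"
        by (rule sum_affine[OF ne])
      also have "\<dots> = real CARD('a) gchoose (n-t)" by (simp add: Nsub_total binomial_gbinomial)
      finally show ?thesis using False by simp
    qed
  qed
  finally show ?thesis .
qed

lemma sumB:
  assumes p: "p > 0"
  shows "(\<Sum>t\<le>n. if p dvd Suc t then EE p Q (n - t) else 0)
       = (if p dvd Suc n then (-1)^(n div p) * ((Q - 1) gchoose (n div p)) else 0)"
proof -
  have "(\<Sum>t\<le>n. if p dvd Suc t then EE p Q (n - t) else 0)
      = (\<Sum>t\<le>n. (\<lambda>s. if p dvd Suc n - s then EE p Q s else 0) (n - t))"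
    by (rule sum.cong[OF refl]) (simp add: Suc_diff_le)
  also have "\<dots> = (\<Sum>s\<le>n. if p dvd Suc n - s then EE p Q s else 0)"
    by (rule sum_rev)
  also have "\<dots> = (\<Sum>s\<le>n. if p dvd Suc n then EE p Q s else 0)"
  proof (rule sum.cong[OF refl])
    fix s assume "s \<in> {..n}"
    then have sn: "s \<le> Suc n" by simp
    show "(if p dvd Suc n - s then EE p Q s else 0) = (if p dvd Suc n then EE p Q s else 0)"
    proof (cases "p dvd s")
      case True
      have "p dvd Suc n - s \<longleftrightarrow> p dvd Suc n"
      proof
        assume "p dvd Suc n - s"
        then have "p dvd (Suc n - s) + s" using True by (rule dvd_add)
        then show "p dvd Suc n" using sn by simp
      next
        assume "p dvd Suc n" then show "p dvd Suc n - s" using True by (rule dvd_diff_nat)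
      qed
      then show ?thesis by simp
    next
      case False then show ?thesis by (simp add: EE_def)
    qed
  qed
  also have "\<dots> = (if p dvd Suc n then (\<Sum>s\<le>n. EE p Q s) else 0)" by simp
  also have "(\<Sum>s\<le>n. EE p Q s) = (\<Sum>u\<le>n div p. hh Q u)"
    unfolding EE_def by (rule sum_dvd_reindex[OF p])
  also have "\<dots> = (-1)^(n div p) * ((Q - 1) gchoose (n div p))"
    unfolding hh_def using gbinomial_sum_lower_neg[of Q "n div p"] by (simp add: mult.commute)
  finally show ?thesis .
qed

lemma core:
  fixes \<beta> :: "'a::{field,finite}"
  shows "real CARD('a) * real (Nsub m \<beta> UNIV) = (real CARD('a) gchoose m)
     + (-1)^m * EE CHAR('a) (real CARD('a) / real CHAR('a)) m * (if \<beta> = 0 then real CARD('a) - 1 else -1)"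
proof (induction m arbitrary: \<beta> rule: less_induct)
  case (less m)
  let ?q = "real CARD('a)"
  let ?p = "CHAR('a)"
  let ?Q = "real CARD('a) / real CHAR('a)"
  let ?W = "(if \<beta> = 0 then ?q - 1 else -1)"
  have p: "?p > 0" by (rule CHAR_pos_fin)
  have qQ: "?q = real ?p * ?Q" using p by simp
  show ?case
  proof (cases m)
    case 0
    then show ?thesis by (simp add: Nsub_0 EE_def hh_def)
  next
    case (Suc n)
    have IH: "?q * real (Nsub (n - t) \<beta> UNIV) = (?q gchoose (n - t)) + (-1)^(n - t) * EE ?p ?Q (n - t) * ?W"
      if "t \<le> n" for t
      using less.IH[of "n - t" \<beta>] Suc by simp
    have "real (Suc n) * (?q * real (Nsub m \<beta> UNIV)) = ?q * (real (Suc n) * real (Nsub (Suc n) \<beta> UNIV))"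
      using Suc by simp
    also have "\<dots> = ?q * (\<Sum>t\<le>n. (-1)^t *
       (if ?p dvd Suc t then ?q * real (Nsub (n-t) \<beta> UNIV) else ?q gchoose (n-t)))"
      by (simp only: recursion)
    also have "\<dots> = ?q * (\<Sum>t\<le>n. (-1)^t * (?q gchoose (n-t)) + (-1)^n * ?W * (if ?p dvd Suc t then EE ?p ?Q (n - t) else 0))"
    proof -
      have "(-1)^t * (if ?p dvd Suc t then ?q * real (Nsub (n-t) \<beta> UNIV) else ?q gchoose (n-t))
        = (-1)^t * (?q gchoose (n-t)) + (-1)^n * ?W * (if ?p dvd Suc t then EE ?p ?Q (n - t) else 0)"
        if t: "t \<le> n" for t
      proof -
        have s: "(-1::real)^t * (-1)^(n - t) = (-1)^n" using t by (simp add: power_add[symmetric])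
        show ?thesis
        proof (cases "?p dvd Suc t")
          case True
          then show ?thesis using IH[OF t] s by (simp add: algebra_simps)
        next
          case False then show ?thesis by simp
        qed
      qed
      then show ?thesis by (intro arg_cong[where f="\<lambda>x. ?q * x"] sum.cong) auto
    qed
    also have "\<dots> = ?q * ((?q - 1) gchoose n) + ?q * (-1)^n * ?W *
        (if ?p dvd Suc n then (-1)^(n div ?p) * ((?Q - 1) gchoose (n div ?p)) else 0)"
      by (simp add: sum.distrib sum_distrib_left[symmetric] alt_gchoose sumB[OF p] algebra_simps)
    also have "\<dots> = real (Suc n) * ((?q gchoose m) + (-1)^m * EE ?p ?Q m * ?W)"
    proof -
      have abs1: "real (Suc n) * (?q gchoose Suc n) = ?q * ((?q - 1) gchoose n)"
        using gbinomial_absorption[of n ?q] by simp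
      show ?thesis
      proof (cases "?p dvd Suc n")
        case False
        then show ?thesis using abs1 Suc by (simp add: EE_def algebra_simps)
      next
        case True
        then obtain M where M: "Suc n = ?p * M" by blast
        then have "M \<noteq> 0" by (metis mult_0_right nat.simps(3))
        then obtain M' where M': "M = Suc M'" by (cases M) auto
        have n: "n = ?p * M' + (?p - 1)" using M M' p by (simp add: algebra_simps)
        have n2: "n = (?p - 1) + ?p * M'" using n by simp
        have hd: "((?p - 1) + ?p * M') div ?p = (?p - 1) div ?p + M'"
          using p by (subst div_mult_self2) simp_all
        have d0: "(?p - 1) div ?p = 0" using p by simp
        have ndiv: "n div ?p = M'" by (subst n2) (use hd d0 in linarith)
        have mdiv: "Suc n div ?p = Suc M'" using p M M' by simp
        have abs2: "real (Suc M') * (?Q gchoose Suc M') = ?Q * ((?Q - 1) gchoose M')"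
          using gbinomial_absorption[of M' ?Q] by simp
        have EEm: "EE ?p ?Q (Suc n) = (-1)^(Suc M') * (?Q gchoose Suc M')"
          using True mdiv by (simp add: EE_def hh_def)
        have rs: "real (Suc n) = real ?p * real (Suc M')" using M M' by (simp only: of_nat_mult)
        have "real (Suc n) * ((-1)^(Suc n) * EE ?p ?Q (Suc n) * ?W)
            = real ?p * (-1)^n * (-1)^M' * ?W * (real (Suc M') * (?Q gchoose Suc M'))"
          unfolding EEm rs by (simp add: algebra_simps)
        also have "\<dots> = (real ?p * ?Q) * ((-1)^n * ?W * ((-1)^M' * ((?Q - 1) gchoose M')))"
          unfolding abs2 by (simp add: algebra_simps)
        also have "\<dots> = ?q * (-1)^n * ?W * ((-1)^M' * ((?Q - 1) gchoose M'))"
          using p by (simp add: algebra_simps)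
        finally have F: "real (Suc n) * ((-1)^(Suc n) * EE ?p ?Q (Suc n) * ?W)
            = ?q * (-1)^n * ?W * ((-1)^M' * ((?Q - 1) gchoose M'))" .
        have X: "real (Suc n) * ((?q gchoose m) + (-1)^m * EE ?p ?Q m * ?W) = real (Suc n) * (?q gchoose Suc n) + real (Suc n) * ((-1)^(Suc n) * EE ?p ?Q (Suc n) * ?W)"
          using Suc by (simp only: distrib_left)
        have I: "(if ?p dvd Suc n then (-1)^(n div ?p) * ((?Q - 1) gchoose (n div ?p)) else 0) = (-1)^M' * ((?Q - 1) gchoose M')"
          using True ndiv by simp
        show ?thesis by (simp only: I X abs1 F)
      qed
    qed
    finally show ?thesis using Suc by simp
  qed
qed

lemma Sfun_eq: "Sfun p q k (e::'a::field) = (\<Sum>i\<in>{i. i \<le> k \<and> (of_nat i :: 'a) = e}. R1 p q i)"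
proof (cases "e \<in> range (of_nat :: nat \<Rightarrow> 'a)")
  case True then show ?thesis unfolding Sfun_def by simp
next
  case False
  then have "{i. i \<le> k \<and> (of_nat i :: 'a) = e} = {}" by auto
  then show ?thesis using False unfolding Sfun_def by (simp only: if_False sum.empty)
qed

lemma sumEE:
  assumes p: "p > 0"
  shows "(\<Sum>t\<le>n. EE p (real q / real p) (n - t)) = - R1 p q n"
proof -
  have "(\<Sum>t\<le>n. EE p (real q / real p) (n - t)) = (\<Sum>s\<le>n. EE p (real q / real p) s)"
    by (rule sum_rev)
  also have "\<dots> = (\<Sum>u\<le>n div p. hh (real q / real p) u)"
    unfolding EE_def by (rule sum_dvd_reindex[OF p])
  also have "\<dots> = (-1)^(n div p) * ((real q / real p - 1) gchoose (n div p))"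
    unfolding hh_def using gbinomial_sum_lower_neg[of "real q / real p" "n div p"] by (simp add: mult.commute)
  finally show ?thesis unfolding R1_def by simp
qed

lemma core':
  fixes \<gamma> :: "'a::{field,finite}"
  shows "real (Nsub n \<gamma> UNIV) = (1 / real CARD('a)) * (real CARD('a) gchoose n)
     + (-1)^n * EE CHAR('a) (real CARD('a) / real CHAR('a)) n * ((if \<gamma> = 0 then 1 else 0) - 1 / real CARD('a))"
proof -
  have q: "real CARD('a) > 0" by simp
  show ?thesis using core[of n \<gamma>] q by (simp add: field_simps split: if_splits)
qed

lemma remove0:
  fixes \<gamma> :: "'a::{field,finite}"
  shows "real (Nsub n \<gamma> (UNIV - {0})) = (1 / real CARD('a)) * ((real CARD('a) - 1) gchoose n)
     - (-1)^n * ((if \<gamma> = 0 then 1 else 0) - 1 / real CARD('a)) * R1 CHAR('a) CARD('a) n"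
proof -
  let ?q = "real CARD('a)"
  let ?p = "CHAR('a)"
  let ?Q = "real CARD('a) / real CHAR('a)"
  let ?V = "((if \<gamma> = 0 then 1 else 0) - 1 / real CARD('a))"
  have p: "?p > 0" by (rule CHAR_pos_fin)
  have "real (Nsub n \<gamma> (UNIV - {0})) = (\<Sum>t\<le>n. (-1)^t * real (Nsub (n - t) (\<gamma> - of_nat t * 0) UNIV))"
    by (rule Nsub_remove) simp
  also have "\<dots> = (\<Sum>t\<le>n. (1 / ?q) * ((-1)^t * (?q gchoose (n - t))) + (-1)^n * ?V * EE ?p ?Q (n - t))"
  proof (rule sum.cong[OF refl])
    fix t assume "t \<in> {..n}"
    then have s: "(-1::real)^t * (-1)^(n - t) = (-1)^n" by (simp add: power_add[symmetric])
    have e0: "(\<gamma> - of_nat t * (0::'a)) = \<gamma>" by simp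
    have "(-1)^t * real (Nsub (n - t) (\<gamma> - of_nat t * 0) UNIV) = (1 / ?q) * ((-1)^t * (?q gchoose (n - t))) + ((-1)^t * (-1)^(n - t)) * ?V * EE ?p ?Q (n - t)"
      unfolding e0 core'[of "n - t" \<gamma>] by (simp only: algebra_simps)
    then show "(-1)^t * real (Nsub (n - t) (\<gamma> - of_nat t * 0) UNIV) = (1 / ?q) * ((-1)^t * (?q gchoose (n - t))) + (-1)^n * ?V * EE ?p ?Q (n - t)"
      unfolding s .
  qed
  also have "\<dots> = (1 / ?q) * ((?q - 1) gchoose n) + (-1)^n * ?V * (\<Sum>t\<le>n. EE ?p ?Q (n - t))"
    by (simp add: sum.distrib sum_distrib_left[symmetric] sum_divide_distrib[symmetric] alt_gchoose)
  also have "\<dots> = (1 / ?q) * ((?q - 1) gchoose n) - (-1)^n * ?V * R1 ?p CARD('a) n"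
    using sumEE[OF p, where n=n and q="CARD('a)"] by simp
  finally show ?thesis .
qed

lemma two:
  fixes \<beta> :: "'a::{field,finite}"
  shows "real (Nsub m \<beta> (UNIV - {0, 1})) = (1 / real CARD('a)) * ((real CARD('a) - 2) gchoose m)
     + (1 / real CARD('a)) * (-1)^m * Rc CHAR('a) CARD('a) 2 m
     - (-1)^m * Sfun CHAR('a) CARD('a) m (of_nat m - \<beta>)"
proof -
  let ?q = "real CARD('a)"
  let ?R = "R1 CHAR('a) CARD('a)"
  have set: "UNIV - {0, 1::'a} = (UNIV - {0}) - {1}" by auto
  have "real (Nsub m \<beta> (UNIV - {0, 1})) = (\<Sum>u\<le>m. (-1)^u * real (Nsub (m - u) (\<beta> - of_nat u * 1) (UNIV - {0})))"
    unfolding set by (rule Nsub_remove) simp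
  also have "\<dots> = (\<Sum>u\<le>m. (1 / ?q) * ((-1)^u * ((?q - 1) gchoose (m - u)))
         + (1 / ?q) * (-1)^m * ?R (m - u) - (-1)^m * ((if \<beta> = of_nat u then 1 else 0) * ?R (m - u)))"
  proof (rule sum.cong[OF refl])
    fix u assume "u \<in> {..m}"
    then have s: "(-1::real)^u * (-1)^(m - u) = (-1)^m" by (simp add: power_add[symmetric])
    have e: "(\<beta> - of_nat u * 1 = 0) = (\<beta> = of_nat u)" by simp
    show "(-1)^u * real (Nsub (m - u) (\<beta> - of_nat u * 1) (UNIV - {0})) = (1 / ?q) * ((-1)^u * ((?q - 1) gchoose (m - u)))
         + (1 / ?q) * (-1)^m * ?R (m - u) - (-1)^m * ((if \<beta> = of_nat u then 1 else 0) * ?R (m - u))"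
    proof -
      have "(-1)^u * real (Nsub (m - u) (\<beta> - of_nat u * 1) (UNIV - {0})) = (1 / ?q) * ((-1)^u * ((?q - 1) gchoose (m - u)))
         - ((-1)^u * (-1)^(m - u)) * ((if \<beta> = of_nat u then 1 else 0) - 1 / ?q) * ?R (m - u)"
        unfolding remove0[of "m - u"] e by (simp only: algebra_simps)
      also have "\<dots> = (1 / ?q) * ((-1)^u * ((?q - 1) gchoose (m - u)))
         + (1 / ?q) * (-1)^m * ?R (m - u) - (-1)^m * ((if \<beta> = of_nat u then 1 else 0) * ?R (m - u))"
        unfolding s by (simp add: algebra_simps)
      finally show ?thesis .
    qed
  qed
  also have "\<dots> = (1 / ?q) * ((?q - 2) gchoose m) + (1 / ?q) * (-1)^m * (\<Sum>u\<le>m. ?R (m - u))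
      - (-1)^m * (\<Sum>u\<le>m. (if \<beta> = of_nat u then 1 else 0) * ?R (m - u))"
    by (simp add: sum.distrib sum_subtractf sum_distrib_left[symmetric] sum_divide_distrib[symmetric] alt_gchoose)
  also have "(\<Sum>u\<le>m. ?R (m - u)) = Rc CHAR('a) CARD('a) 2 m"
    by (simp add: sum_rev numeral_2_eq_2)
  also have "(\<Sum>u\<le>m. (if \<beta> = of_nat u then 1 else 0) * ?R (m - u)) = Sfun CHAR('a) CARD('a) m (of_nat m - \<beta>)"
  proof -
    have "(\<Sum>u\<le>m. (if \<beta> = of_nat u then 1 else 0) * ?R (m - u))
        = (\<Sum>u\<le>m. (\<lambda>i. (if \<beta> = of_nat (m - i) then 1 else 0) * ?R i) (m - u))"
      by (rule sum.cong[OF refl]) (simp add: diff_diff_cancel)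
    also have "\<dots> = (\<Sum>i\<le>m. (if \<beta> = of_nat (m - i) then 1 else 0) * ?R i)"
      by (rule sum_rev)
    also have "\<dots> = (\<Sum>i\<le>m. (if (of_nat i :: 'a) = of_nat m - \<beta> then ?R i else 0))"
    proof (rule sum.cong[OF refl])
      fix i assume "i \<in> {..m}"
      then have h: "(of_nat (m - i) :: 'a) = of_nat m - of_nat i" by (simp add: of_nat_diff)
      have "(\<beta> = of_nat (m - i)) = ((of_nat i :: 'a) = of_nat m - \<beta>)"
        unfolding h eq_diff_eq by (simp add: add.commute)
      then show "(if \<beta> = of_nat (m - i) then 1 else 0) * ?R i = (if (of_nat i :: 'a) = of_nat m - \<beta> then ?R i else 0)"
        by simp
    qed
    also have "\<dots> = (\<Sum>i\<in>{i. i \<le> m \<and> (of_nat i :: 'a) = of_nat m - \<beta>}. ?R i)"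
      by (simp add: sum.If_cases Int_def atMost_def conj_commute)
    also have "\<dots> = Sfun CHAR('a) CARD('a) m (of_nat m - \<beta>)" by (simp add: Sfun_eq)
    finally show ?thesis .
  qed
  finally show ?thesis .
qed

lemma reidx:
  fixes c :: nat
  assumes c: "c \<ge> 3"
  shows "(\<Sum>j\<in>{3..c}. f (c + 1 - j) j) = (\<Sum>j\<in>{1..c-2}. f j (c + 1 - j))"
  by (rule sum.reindex_bij_witness[where i="\<lambda>j. c + 1 - j" and j="\<lambda>j. c + 1 - j"]) (use c in auto)

theorem lemma4p2:
  fixes a :: "nat \<Rightarrow> 'a::{field,finite}" and b :: 'a and c k :: nat
  defines "q \<equiv> CARD('a)" and "p \<equiv> CHAR('a)"
      and "D \<equiv> UNIV - a ` {1..c}"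
  assumes c3: "c \<ge> 3"
      and a1: "a 1 = 0" and a2: "a 2 = 1"
      and dist: "inj_on a {1..c}"
      and k1: "1 \<le> k" and kq: "k \<le> q - c"
  shows "(real (Nsub k b D) - (1 / real q) * real ((q - c) choose k)
         = (1 / real q) * (-1) ^ k * Rc p q c k
           - (-1) ^ k * (\<Sum>i\<in>{i :: nat \<Rightarrow> nat. (\<forall>j. j \<notin> {1..c-2} \<longrightarrow> i j = 0)
                                    \<and> (\<Sum>j=1..c-2. i j) \<le> k}.
               Sfun p q (k - (\<Sum>j=1..c-2. i j))
                 (of_nat (k - (\<Sum>j=1..c-2. i j)) - b
                   + (\<Sum>j=1..c-2. of_nat (i j) * a (c + 1 - j)))))
    \<and> ((\<forall>l :: nat \<Rightarrow> nat.
            of_nat (l 0) * b + (\<Sum>j=2..c. of_nat (l j) * a j) = 0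
            \<longrightarrow> (\<forall>j\<in>insert 0 {2..c}. (of_nat (l j) :: 'a) = 0))
         \<longrightarrow> real (Nsub k b D) = (1 / real q) * real ((q - c) choose k)
                                 + (1 / real q) * (-1) ^ k * Rc p q c k)"
proof -
  define J where "J = {1..c-2}"
  define \<alpha> where "\<alpha> = (\<lambda>j. a (c + 1 - j))"
  define E where "E = UNIV - {0, 1::'a}"
  define S where "S = (\<Sum>i\<in>Fn J k. Sfun p q (k - sum i J) (of_nat (k - sum i J) - b + (\<Sum>j\<in>J. of_nat (i j) * \<alpha> j)))"
  have Jfin: "finite J" unfolding J_def by simp
  have cardJ: "card J + 2 = c" unfolding J_def using c3 by simp
  have Jin: "c + 1 - j \<in> {3..c}" if "j \<in> J" for j using that c3 unfolding J_def by auto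
  have inj: "inj_on \<alpha> J"
  proof (rule inj_onI)
    fix x y assume x: "x \<in> J" and y: "y \<in> J" and e: "\<alpha> x = \<alpha> y"
    have "c + 1 - x = c + 1 - y"
      using inj_onD[OF dist e[unfolded \<alpha>_def]] Jin[OF x] Jin[OF y] by auto
    then show "x = y" using x y c3 unfolding J_def by auto
  qed
  have aJ: "\<alpha> ` J = a ` {3..c}"
  proof
    show "\<alpha> ` J \<subseteq> a ` {3..c}" using Jin unfolding \<alpha>_def by auto
    show "a ` {3..c} \<subseteq> \<alpha> ` J"
    proof
      fix x assume "x \<in> a ` {3..c}"
      then obtain i where i: "i \<in> {3..c}" "x = a i" by auto
      then have "c + 1 - i \<in> J" "\<alpha> (c + 1 - i) = x" unfolding J_def \<alpha>_def by auto
      then show "x \<in> \<alpha> ` J" by (metis image_eqI)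
    qed
  qed
  have a3: "a i \<noteq> 0 \<and> a i \<noteq> 1" if "i \<in> {3..c}" for i
  proof -
    have m: "1 \<in> {1..c}" "2 \<in> {1..c}" "i \<in> {1..c}" "i \<noteq> 1" "i \<noteq> 2" using that c3 by auto
    have "a i \<noteq> a 1" "a i \<noteq> a 2" using m by (simp_all add: inj_on_eq_iff[OF dist])
    then show ?thesis using a1 a2 by simp
  qed
  have sub: "\<alpha> ` J \<subseteq> E" unfolding aJ E_def using a3 by auto
  have Deq: "D = E - \<alpha> ` J"
  proof -
    have "{1..c} = {1, 2} \<union> {3..c}" using c3 by auto
    then have "a ` {1..c} = {0, 1} \<union> a ` {3..c}" using a1 a2 by auto
    then show ?thesis unfolding D_def E_def aJ by auto
  qed
  have p0: "p > 0" unfolding p_def by (rule CHAR_pos_fin)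
  have cq: "c \<le> q" using k1 kq by simp
  have "real (Nsub k b D) = (\<Sum>i\<in>Fn J k. (-1)^(sum i J) * real (Nsub (k - sum i J) (b - (\<Sum>j\<in>J. of_nat (i j) * \<alpha> j)) E))"
    unfolding Deq by (rule Nsub_remove_set[OF Jfin inj sub])
  also have "\<dots> = (\<Sum>i\<in>Fn J k. (1 / real q) * ((-1)^(sum i J) * ((real q - 2) gchoose (k - sum i J)))
       + (1 / real q) * (-1)^k * Rc p q 2 (k - sum i J)
       - (-1)^k * Sfun p q (k - sum i J) (of_nat (k - sum i J) - b + (\<Sum>j\<in>J. of_nat (i j) * \<alpha> j)))"
  proof (rule sum.cong[OF refl])
    fix i assume "i \<in> Fn J k"
    then have sk: "sum i J \<le> k" unfolding Fn_def by simp
    then have s: "(-1::real)^(sum i J) * (-1)^(k - sum i J) = (-1)^k" by (simp add: power_add[symmetric])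
    have e: "(of_nat (k - sum i J) - (b - (\<Sum>j\<in>J. of_nat (i j) * \<alpha> j)) :: 'a)
        = of_nat (k - sum i J) - b + (\<Sum>j\<in>J. of_nat (i j) * \<alpha> j)" by (simp add: algebra_simps)
    have "(-1)^(sum i J) * real (Nsub (k - sum i J) (b - (\<Sum>j\<in>J. of_nat (i j) * \<alpha> j)) E)
       = (1 / real q) * ((-1)^(sum i J) * ((real q - 2) gchoose (k - sum i J)))
       + (1 / real q) * ((-1)^(sum i J) * (-1)^(k - sum i J)) * Rc p q 2 (k - sum i J)
       - ((-1)^(sum i J) * (-1)^(k - sum i J)) * Sfun p q (k - sum i J) (of_nat (k - sum i J) - b + (\<Sum>j\<in>J. of_nat (i j) * \<alpha> j))"
      unfolding E_def two e p_def q_def by (simp only: algebra_simps)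
    then show "(-1)^(sum i J) * real (Nsub (k - sum i J) (b - (\<Sum>j\<in>J. of_nat (i j) * \<alpha> j)) E)
       = (1 / real q) * ((-1)^(sum i J) * ((real q - 2) gchoose (k - sum i J)))
       + (1 / real q) * (-1)^k * Rc p q 2 (k - sum i J)
       - (-1)^k * Sfun p q (k - sum i J) (of_nat (k - sum i J) - b + (\<Sum>j\<in>J. of_nat (i j) * \<alpha> j))"
      unfolding s .
  qed
  also have "\<dots> = (1 / real q) * ((real q - 2 - of_nat (card J)) gchoose k)
       + (1 / real q) * (-1)^k * Rc p q (card J + 2) k - (-1)^k * S"
    unfolding S_def Fn_binom[OF Jfin, symmetric] Fn_Rc[OF Jfin, symmetric]
    by (simp add: sum.distrib sum_subtractf sum_distrib_left)
  also have "(real q - 2 - of_nat (card J)) gchoose k = real ((q - c) choose k)"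
  proof -
    have "real q - 2 - of_nat (card J) = real (q - c)" using cardJ cq by (simp add: of_nat_diff)
    then show ?thesis by (simp add: binomial_gbinomial)
  qed
  finally have main: "real (Nsub k b D) = (1 / real q) * real ((q - c) choose k) + (1 / real q) * (-1)^k * Rc p q c k - (-1)^k * S"
    unfolding cardJ .
  have Sst: "S = (\<Sum>i\<in>{i :: nat \<Rightarrow> nat. (\<forall>j. j \<notin> {1..c-2} \<longrightarrow> i j = 0) \<and> (\<Sum>j=1..c-2. i j) \<le> k}.
               Sfun p q (k - (\<Sum>j=1..c-2. i j))
                 (of_nat (k - (\<Sum>j=1..c-2. i j)) - b + (\<Sum>j=1..c-2. of_nat (i j) * a (c + 1 - j))))"
    unfolding S_def Fn_def J_def \<alpha>_def by simp
  show ?thesis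
  proof (intro conjI impI)
    show "real (Nsub k b D) - 1 / real q * real (q - c choose k) = 1 / real q * (- 1) ^ k * Rc p q c k - (- 1) ^ k * (\<Sum>i\<in>{i :: nat \<Rightarrow> nat. (\<forall>j. j \<notin> {1..c-2} \<longrightarrow> i j = 0) \<and> (\<Sum>j=1..c-2. i j) \<le> k}.
               Sfun p q (k - (\<Sum>j=1..c-2. i j))
                 (of_nat (k - (\<Sum>j=1..c-2. i j)) - b + (\<Sum>j=1..c-2. of_nat (i j) * a (c + 1 - j))))"
      unfolding Sst[symmetric] main by simp
  next
    assume H: "\<forall>l :: nat \<Rightarrow> nat. of_nat (l 0) * b + (\<Sum>j=2..c. of_nat (l j) * a j) = 0
            \<longrightarrow> (\<forall>j\<in>insert 0 {2..c}. (of_nat (l j) :: 'a) = 0)"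
    have pm1: "(of_nat (p - 1) :: 'a) = -1"
      using p0 unfolding p_def by (simp add: of_nat_diff)
    have "S = 0"
      unfolding S_def
    proof (rule sum.neutral, rule ballI)
      fix i assume "i \<in> Fn J k"
      let ?m = "k - sum i J"
      let ?e = "(of_nat ?m - b + (\<Sum>j\<in>J. of_nat (i j) * \<alpha> j)) :: 'a"
      have "?e \<notin> range (of_nat :: nat \<Rightarrow> 'a)"
      proof
        assume "?e \<in> range (of_nat :: nat \<Rightarrow> 'a)"
        then obtain n where n: "?e = of_nat n" by auto
        define l where "l = (\<lambda>j. if j = 0 then p - 1 else if j = 2 then ?m + (p - 1) * n
                                  else if j \<le> c then i (c + 1 - j) else 0)"
        have "{2..c} = insert 2 {3..c}" using c3 by auto
        then have "(\<Sum>j=2..c. of_nat (l j) * a j) = of_nat (l 2) * a 2 + (\<Sum>j=3..c. of_nat (l j) * a j)"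
          by simp
        also have "(\<Sum>j=3..c. of_nat (l j) * a j) = (\<Sum>j=3..c. of_nat (i (c + 1 - j)) * a j)"
          by (rule sum.cong) (auto simp: l_def)
        also have "\<dots> = (\<Sum>j\<in>J. of_nat (i j) * \<alpha> j)"
          unfolding J_def \<alpha>_def by (rule reidx[OF c3, where f="\<lambda>x y. of_nat (i x) * a y"])
        also have "of_nat (l 2) * a 2 = (of_nat ?m - of_nat n :: 'a)"
          unfolding l_def a2 using pm1 by simp
        finally have "of_nat (l 0) * b + (\<Sum>j=2..c. of_nat (l j) * a j) = ?e - of_nat n"
          unfolding l_def using pm1 by (simp add: algebra_simps)
        then have "of_nat (l 0) * b + (\<Sum>j=2..c. of_nat (l j) * a j) = 0" using n by simp
        then have "(of_nat (l 0) :: 'a) = 0" using H by blast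
        then show False unfolding l_def using pm1 by simp
      qed
      then show "Sfun p q (k - sum i J) ?e = 0" unfolding Sfun_def by simp
    qed
    then show "real (Nsub k b D) = 1 / real q * real (q - c choose k) + 1 / real q * (- 1) ^ k * Rc p q c k"
      unfolding main by simp
  qed
qed

end
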